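(* For every integer $t_1\geq 2$, setting $t_2=t_1+1$, there exist a connected graph $G$ and a function $g:A\to B$ such that $fix(G)=t_1$ and $fix(F_G)=t_2$.
   Context: A set $S\subseteq V(H)$ is a fixing set of a graph $H$ if the only automorphism of $H$ fixing every vertex of $S$ is the identity; $fix(H)$ is the minimum cardinality of a fixing set of $H$. Functigraph: let $G_1,G_2$ be disjoint copies of a connected graph $G$, with $A=V(G_1)$, $B=V(G_2)$, and let $g:A\to B$ be a function. The functigraph $F_G$ has vertex set $A\cup B$ and edge set $E(G_1)\cup E(G_2)\cup\{ug(u):u\in A\}$. *)

theory Defs
  imports Main
begin

definition simple_graph :: "'a set \<Rightarrow> 'a set set \<Rightarrow> bool" where
  "simple_graph V E \<longleftrightarrow> finite V \<and> (\<forall>e\<in>E. e \<subseteq> V \<and> card e = 2)"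

definition adj_rel :: "'a set set \<Rightarrow> ('a \<times> 'a) set" where
  "adj_rel E = {(u, v). {u, v} \<in> E}"

definition connected_graph :: "'a set \<Rightarrow> 'a set set \<Rightarrow> bool" where
  "connected_graph V E \<longleftrightarrow> V \<noteq> {} \<and> (\<forall>u\<in>V. \<forall>v\<in>V. (u, v) \<in> (adj_rel E)\<^sup>*)"

definition automorphism :: "'a set \<Rightarrow> 'a set set \<Rightarrow> ('a \<Rightarrow> 'a) \<Rightarrow> bool" where
  "automorphism V E f \<longleftrightarrow> bij_betw f V V \<and>
     (\<forall>u\<in>V. \<forall>v\<in>V. {u, v} \<in> E \<longleftrightarrow> {f u, f v} \<in> E)"

definition fixing_set :: "'a set \<Rightarrow> 'a set set \<Rightarrow> 'a set \<Rightarrow> bool" where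
  "fixing_set V E S \<longleftrightarrow> S \<subseteq> V \<and>
     (\<forall>f. automorphism V E f \<and> (\<forall>s\<in>S. f s = s) \<longrightarrow> (\<forall>v\<in>V. f v = v))"

definition fix_num :: "'a set \<Rightarrow> 'a set set \<Rightarrow> nat" where
  "fix_num V E = (LEAST n. \<exists>S. fixing_set V E S \<and> card S = n)"

text \<open>Functigraph: A = Inl ` V (copy G1), B = Inr ` V (copy G2); g : V \<Rightarrow> V encodes
  the function A \<rightarrow> B, Inl u \<mapsto> Inr (g u).\<close>
definition functi_V :: "'a set \<Rightarrow> ('a + 'a) set" where
  "functi_V V = Inl ` V \<union> Inr ` V"

definition functi_E :: "'a set \<Rightarrow> 'a set set \<Rightarrow> ('a \<Rightarrow> 'a) \<Rightarrow> ('a + 'a) set set" where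
  "functi_E V E g = (\<lambda>e. Inl ` e) ` E \<union> (\<lambda>e. Inr ` e) ` E \<union> {{Inl u, Inr (g u)} | u. u \<in> V}"

end

theory Submission
  imports Defs
begin


definition nbr :: "'a set \<Rightarrow> 'a set set \<Rightarrow> 'a \<Rightarrow> 'a set" where
  "nbr V E v = {w\<in>V. {v,w}\<in>E}"

lemma aut_nbr:
  assumes "automorphism V E f" "v \<in> V"
  shows "f ` nbr V E v = nbr V E (f v)"
proof -
  have b: "bij_betw f V V" and a: "\<And>u w. u\<in>V \<Longrightarrow> w\<in>V \<Longrightarrow> {u,w}\<in>E \<longleftrightarrow> {f u, f w}\<in>E"
    using assms(1) unfolding automorphism_def by auto
  show ?thesis
  proof
    show "f ` nbr V E v \<subseteq> nbr V E (f v)"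
      using a assms(2) b bij_betw_apply unfolding nbr_def by fastforce
    show "nbr V E (f v) \<subseteq> f ` nbr V E v"
    proof
      fix w assume w: "w \<in> nbr V E (f v)"
      then have "w \<in> V" unfolding nbr_def by auto
      then obtain u where u: "u \<in> V" "w = f u" using b by (metis bij_betw_imp_surj_on imageE)
      then have "{v,u}\<in>E" using a[OF assms(2) u(1)] w unfolding nbr_def by auto
      then show "w \<in> f ` nbr V E v" using u unfolding nbr_def by auto
    qed
  qed
qed

lemma aut_card:
  assumes "automorphism V E f" "v \<in> V"
  shows "card (nbr V E (f v)) = card (nbr V E v)"
proof -
  have "inj_on f V" using assms(1) unfolding automorphism_def bij_betw_def by auto
  moreover have "nbr V E v \<subseteq> V" unfolding nbr_def by auto
  ultimately have i: "inj_on f (nbr V E v)" by (rule inj_on_subset)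
  have "card (nbr V E (f v)) = card (f ` nbr V E v)" by (simp add: aut_nbr[OF assms])
  also have "\<dots> = card (nbr V E v)" using i by (rule card_image)
  finally show ?thesis .
qed

lemma pin:
  assumes "automorphism V E f" "v \<in> V" "y \<in> V" "f y = y" "{y,v} \<in> E"
    "\<And>w. w\<in>V \<Longrightarrow> {y,w}\<in>E \<Longrightarrow> w = v \<or> f w = w"
  shows "f v = v"
proof -
  have b: "bij_betw f V V" and a: "\<And>u w. u\<in>V \<Longrightarrow> w\<in>V \<Longrightarrow> {u,w}\<in>E \<longleftrightarrow> {f u, f w}\<in>E"
    using assms(1) unfolding automorphism_def by auto
  have fv: "f v \<in> V" using b assms(2) bij_betw_apply by metis
  have "{y, f v} \<in> E" using a[OF assms(3,2)] assms(4,5) by simp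
  then have "f v = v \<or> f (f v) = f v" using assms(6) fv by blast
  then show ?thesis using b fv assms(2) unfolding bij_betw_def inj_on_def by blast
qed

lemma pin2:
  assumes "automorphism V E f" "v \<in> V" "y \<in> V" "f y = y" "{y,v} \<in> E"
    "z \<in> V" "f z = z" "{z,v} \<in> E"
    "\<And>w. w\<in>V \<Longrightarrow> {y,w}\<in>E \<Longrightarrow> {z,w}\<in>E \<Longrightarrow> w = v \<or> f w = w"
  shows "f v = v"
proof -
  have b: "bij_betw f V V" and a: "\<And>u w. u\<in>V \<Longrightarrow> w\<in>V \<Longrightarrow> {u,w}\<in>E \<longleftrightarrow> {f u, f w}\<in>E"
    using assms(1) unfolding automorphism_def by auto
  have fv: "f v \<in> V" using b assms(2) bij_betw_apply by metis
  have "{y, f v} \<in> E" using a[OF assms(3,2)] assms(4,5) by simp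
  moreover have "{z, f v} \<in> E" using a[OF assms(6,2)] assms(7,8) by simp
  ultimately have "f v = v \<or> f (f v) = f v" using assms(9) fv by blast
  then show ?thesis using b fv assms(2) unfolding bij_betw_def inj_on_def by blast
qed

lemma pin_deg:
  assumes "automorphism V E f" "v \<in> V" "y \<in> V" "f y = y" "{y,v} \<in> E"
    "\<And>w. w\<in>V \<Longrightarrow> {y,w}\<in>E \<Longrightarrow> card (nbr V E w) = card (nbr V E v) \<Longrightarrow> w = v \<or> f w = w"
  shows "f v = v"
proof -
  have b: "bij_betw f V V" and a: "\<And>u w. u\<in>V \<Longrightarrow> w\<in>V \<Longrightarrow> {u,w}\<in>E \<longleftrightarrow> {f u, f w}\<in>E"
    using assms(1) unfolding automorphism_def by auto
  have fv: "f v \<in> V" using b assms(2) bij_betw_apply by metis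
  have "{y, f v} \<in> E" using a[OF assms(3,2)] assms(4,5) by simp
  moreover have "card (nbr V E (f v)) = card (nbr V E v)" using aut_card[OF assms(1,2)] .
  ultimately have "f v = v \<or> f (f v) = f v" using assms(6) fv by blast
  then show ?thesis using b fv assms(2) unfolding bij_betw_def inj_on_def by blast
qed

definition sw :: "'a \<Rightarrow> 'a \<Rightarrow> 'a \<Rightarrow> 'a" where
  "sw a b x = (if x = a then b else if x = b then a else x)"

lemma sw_aut:
  assumes "a\<in>V" "b\<in>V" "a\<noteq>b" "\<And>x. {x,x}\<notin>E"
    "\<And>w. w\<in>V \<Longrightarrow> w\<noteq>a \<Longrightarrow> w\<noteq>b \<Longrightarrow> ({a,w}\<in>E \<longleftrightarrow> {b,w}\<in>E)"
  shows "automorphism V E (sw a b)"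
  unfolding automorphism_def
proof
  show "bij_betw (sw a b) V V"
    by (rule bij_betw_byWitness[where f'="sw a b"]) (auto simp: sw_def assms(1,2))
  show "\<forall>u\<in>V. \<forall>v\<in>V. ({u, v} \<in> E) = ({sw a b u, sw a b v} \<in> E)"
  proof (intro ballI)
    fix u v assume u: "u\<in>V" and v: "v\<in>V"
    have c: "{x,y} = {y,x}" for x y :: 'a by (rule insert_commute)
    have h: "w\<in>V \<Longrightarrow> w\<noteq>a \<Longrightarrow> w\<noteq>b \<Longrightarrow> ({w,a}\<in>E \<longleftrightarrow> {w,b}\<in>E)" for w
      using assms(5)[of w] c by metis
    show "({u, v} \<in> E) = ({sw a b u, sw a b v} \<in> E)"
    proof (cases "u = a \<or> u = b")
      case True
      then show ?thesis
      proof (cases "v = a \<or> v = b")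
        case True
        then show ?thesis using \<open>u = a \<or> u = b\<close> assms(3,4) c[of a b] unfolding sw_def by auto
      next
        case False
        then show ?thesis using \<open>u = a \<or> u = b\<close> assms(5)[OF v] unfolding sw_def by auto
      qed
    next
      case False
      then show ?thesis
      proof (cases "v = a \<or> v = b")
        case True
        then show ?thesis using \<open>\<not>(u = a \<or> u = b)\<close> h[OF u] unfolding sw_def by auto
      next
        case False
        then show ?thesis using \<open>\<not>(u = a \<or> u = b)\<close> unfolding sw_def by auto
      qed
    qed
  qed
qed

lemma fix_lower:
  assumes "fixing_set V E S" "finite V" "K \<subseteq> V" "\<And>x. {x,x}\<notin>E"
    "\<And>a b w. a\<in>K \<Longrightarrow> b\<in>K \<Longrightarrow> w\<in>V \<Longrightarrow> w\<noteq>a \<Longrightarrow> w\<noteq>b \<Longrightarrow> ({a,w}\<in>E \<longleftrightarrow> {b,w}\<in>E)"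
  shows "card K \<le> card S + 1"
proof -
  have SV: "S \<subseteq> V" using assms(1) unfolding fixing_set_def by auto
  have fK: "finite K" using assms(2,3) finite_subset by auto
  have fS: "finite S" using assms(2) SV finite_subset by auto
  have "card (K - S) \<le> Suc 0"
  proof (subst card_le_Suc0_iff_eq, use fK in simp, intro ballI, rule ccontr)
    fix a b assume a: "a \<in> K - S" and b: "b \<in> K - S" and ab: "a \<noteq> b"
    have aut: "automorphism V E (sw a b)"
      using sw_aut[of a V b E] a b ab assms(3,4) assms(5)[of a b] by blast
    have "\<forall>s\<in>S. sw a b s = s" using a b unfolding sw_def by auto
    then have "\<forall>v\<in>V. sw a b v = v" using assms(1) aut unfolding fixing_set_def by blast
    then have "sw a b a = a" using a assms(3) by blast
    then show False using ab unfolding sw_def by simp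
  qed
  moreover have "card K = card (K - S) + card (K \<inter> S)"
    using fK by (metis Int_Diff_disjoint Un_Diff_Int card_Un_disjoint finite_Diff finite_Int inf_commute)
  moreover have "card (K \<inter> S) \<le> card S" using fS by (simp add: card_mono)
  ultimately show ?thesis by linarith
qed

lemma fix_num_eq:
  assumes "fixing_set V E S0" "card S0 = t" "\<And>S. fixing_set V E S \<Longrightarrow> t \<le> card S"
  shows "fix_num V E = t"
  unfolding fix_num_def
  by (rule Least_equality) (use assms in auto)

lemma functi_adj:
  "{Inl a, Inl b} \<in> functi_E V E g \<longleftrightarrow> {a,b} \<in> E"
  "{Inr a, Inr b} \<in> functi_E V E g \<longleftrightarrow> {a,b} \<in> E"
  "{Inl a, Inr b} \<in> functi_E V E g \<longleftrightarrow> a \<in> V \<and> b = g a"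
  "{Inr b, Inl a} \<in> functi_E V E g \<longleftrightarrow> a \<in> V \<and> b = g a"
proof -
  have i1: "(Inl ` e :: ('a+'a) set) = {Inl a, Inl b} \<longleftrightarrow> e = {a,b}" for e :: "'a set"
  proof -
    have "{Inl a, Inl b} = (Inl ` {a,b} :: ('a+'a) set)" by simp
    then show ?thesis using inj_image_eq_iff[OF inj_Inl] by metis
  qed
  have i2: "(Inr ` e :: ('a+'a) set) = {Inr a, Inr b} \<longleftrightarrow> e = {a,b}" for e :: "'a set"
  proof -
    have "{Inr a, Inr b} = (Inr ` {a,b} :: ('a+'a) set)" by simp
    then show ?thesis using inj_image_eq_iff[OF inj_Inr] by metis
  qed
  have n1: "Inr ` e \<noteq> {Inl a, Inl b}" for e :: "'a set" by auto
  have n2: "Inl ` e \<noteq> {Inr a, Inr b}" for e :: "'a set" by auto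
  have n3: "Inl ` e \<noteq> {Inl a, Inr b}" for e :: "'a set" by auto
  have n4: "Inr ` e \<noteq> {Inl a, Inr b}" for e :: "'a set" by auto
  have p: "{Inl u, Inr (g u)} = {Inl a, Inr b} \<longleftrightarrow> u = a \<and> g u = b" for u
    by (auto simp: doubleton_eq_iff)
  have U: "X \<in> functi_E V E g \<Longrightarrow> (\<And>e. e \<in> E \<Longrightarrow> X = Inl ` e \<Longrightarrow> P) \<Longrightarrow>
     (\<And>e. e \<in> E \<Longrightarrow> X = Inr ` e \<Longrightarrow> P) \<Longrightarrow> (\<And>u. u \<in> V \<Longrightarrow> X = {Inl u, Inr (g u)} \<Longrightarrow> P) \<Longrightarrow> P"
    for X P unfolding functi_E_def by blast
  show "{Inl a, Inl b} \<in> functi_E V E g \<longleftrightarrow> {a,b} \<in> E"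
  proof
    assume "{Inl a, Inl b} \<in> functi_E V E g"
    then show "{a,b} \<in> E"
    proof (rule U)
      fix e assume "e \<in> E" and h: "({Inl a, Inl b} :: ('a+'a) set) = Inl ` e"
      from h have "(Inl ` e :: ('a+'a) set) = {Inl a, Inl b}" by (rule sym)
      then show ?thesis using i1[of e] \<open>e \<in> E\<close> by blast
    next
      fix e assume "e \<in> E" and h: "({Inl a, Inl b} :: ('a+'a) set) = Inr ` e"
      from h have "(Inr ` e :: ('a+'a) set) = {Inl a, Inl b}" by (rule sym)
      then show ?thesis using n1[of e] \<open>e \<in> E\<close> by blast
    next
      fix u assume "({Inl a, Inl b} :: ('a+'a) set) = {Inl u, Inr (g u)}"
      then show ?thesis by (simp add: doubleton_eq_iff)
    qed
  next
    assume "{a,b} \<in> E"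
    then have "(Inl ` {a,b} :: ('a+'a) set) \<in> (\<lambda>e. Inl ` e) ` E" by (rule imageI)
    then show "{Inl a, Inl b} \<in> functi_E V E g" unfolding functi_E_def by simp
  qed
  show "{Inr a, Inr b} \<in> functi_E V E g \<longleftrightarrow> {a,b} \<in> E"
  proof
    assume "{Inr a, Inr b} \<in> functi_E V E g"
    then show "{a,b} \<in> E"
    proof (rule U)
      fix e assume "e \<in> E" and h: "({Inr a, Inr b} :: ('a+'a) set) = Inl ` e"
      from h have "(Inl ` e :: ('a+'a) set) = {Inr a, Inr b}" by (rule sym)
      then show ?thesis using n2[of e] \<open>e \<in> E\<close> by blast
    next
      fix e assume "e \<in> E" and h: "({Inr a, Inr b} :: ('a+'a) set) = Inr ` e"
      from h have "(Inr ` e :: ('a+'a) set) = {Inr a, Inr b}" by (rule sym)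
      then show ?thesis using i2[of e] \<open>e \<in> E\<close> by blast
    next
      fix u assume "({Inr a, Inr b} :: ('a+'a) set) = {Inl u, Inr (g u)}"
      then show ?thesis by (simp add: doubleton_eq_iff)
    qed
  next
    assume "{a,b} \<in> E"
    then have "(Inr ` {a,b} :: ('a+'a) set) \<in> (\<lambda>e. Inr ` e) ` E" by (rule imageI)
    then show "{Inr a, Inr b} \<in> functi_E V E g" unfolding functi_E_def by simp
  qed
  show 3: "{Inl a, Inr b} \<in> functi_E V E g \<longleftrightarrow> a \<in> V \<and> b = g a"
  proof
    assume "{Inl a, Inr b} \<in> functi_E V E g"
    then show "a \<in> V \<and> b = g a"
    proof (rule U)
      fix e assume "e \<in> E" and h: "({Inl a, Inr b} :: ('a+'a) set) = Inl ` e"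
      from h have "(Inl ` e :: ('a+'a) set) = {Inl a, Inr b}" by (rule sym)
      then show ?thesis using n3[of e] \<open>e \<in> E\<close> by blast
    next
      fix e assume "e \<in> E" and h: "({Inl a, Inr b} :: ('a+'a) set) = Inr ` e"
      from h have "(Inr ` e :: ('a+'a) set) = {Inl a, Inr b}" by (rule sym)
      then show ?thesis using n4[of e] \<open>e \<in> E\<close> by blast
    next
      fix u assume "u \<in> V" "({Inl a, Inr b} :: ('a+'a) set) = {Inl u, Inr (g u)}"
      then show ?thesis using p[of u] by auto
    qed
  next
    assume "a \<in> V \<and> b = g a"
    then have "{Inl a, Inr b} \<in> {{Inl u, Inr (g u)} | u. u \<in> V}" by auto
    then show "{Inl a, Inr b} \<in> functi_E V E g" unfolding functi_E_def by (rule UnI2)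
  qed
  show "{Inr b, Inl a} \<in> functi_E V E g \<longleftrightarrow> a \<in> V \<and> b = g a"
  proof -
    have "{Inr b, Inl a} = {Inl a, Inr b}" by (rule insert_commute)
    then show ?thesis using 3 by simp
  qed
qed



definition Vg :: "nat \<Rightarrow> nat set" where "Vg m = {..<2*m}"
definition Eg :: "nat \<Rightarrow> nat set set" where
  "Eg m = {{0,i} | i. 1 \<le> i \<and> i \<le> m+1} \<union> {{i, Suc i} | i. m+1 \<le> i \<and> Suc i < 2*m}"
definition gg :: "nat \<Rightarrow> nat \<Rightarrow> nat" where
  "gg m x = (if x = 0 then 1 else if x \<le> m then 0 else x - m + 1)"

lemma adjG: "{u,v} \<in> Eg m \<longleftrightarrow> (u=0 \<and> 1\<le>v \<and> v\<le>m+1) \<or> (v=0 \<and> 1\<le>u \<and> u\<le>m+1)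
   \<or> (m+1\<le>u \<and> v=Suc u \<and> v<2*m) \<or> (m+1\<le>v \<and> u=Suc v \<and> u<2*m)"
  unfolding Eg_def by (auto simp: doubleton_eq_iff)

lemma noloopG: "{x,x} \<notin> Eg m" unfolding adjG by auto

lemma G_simple: "m \<ge> 3 \<Longrightarrow> simple_graph (Vg m) (Eg m)"
  unfolding simple_graph_def Vg_def Eg_def by (auto simp: card_insert_if)

lemma G_connected:
  assumes "m \<ge> 3" shows "connected_graph (Vg m) (Eg m)"
proof -
  let ?R = "adj_rel (Eg m)"
  have symR: "(u,v) \<in> ?R \<Longrightarrow> (v,u) \<in> ?R" for u v unfolding adj_rel_def by (simp add: insert_commute)
  have cR: "?R\<inverse> = ?R" using symR by auto
  have p: "(0, m+1+d) \<in> ?R\<^sup>*" if "m+1+d < 2*m" for d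
    using that
  proof (induction d)
    case 0 then show ?case unfolding adj_rel_def adjG by (intro r_into_rtrancl) auto
  next
    case (Suc d)
    then have "(0, m+1+d) \<in> ?R\<^sup>*" by simp
    moreover have "(m+1+d, m+1+Suc d) \<in> ?R" unfolding adj_rel_def adjG using Suc.prems by auto
    ultimately show ?case by (rule rtrancl_into_rtrancl)
  qed
  have a: "(0,u) \<in> ?R\<^sup>*" if "u \<in> Vg m" for u
  proof -
    consider "u = 0" | "1 \<le> u \<and> u \<le> m+1" | "u > m+1" by linarith
    then show ?thesis
    proof cases
      case 1 then show ?thesis by simp
    next
      case 2 then show ?thesis unfolding adj_rel_def adjG by (intro r_into_rtrancl) auto
    next
      case 3
      then obtain d where "u = m+1+d" by (metis less_imp_add_positive add.commute add_Suc_right nat_less_le)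
      then show ?thesis using p that unfolding Vg_def by auto
    qed
  qed
  have b: "(u,0) \<in> ?R\<^sup>*" if "u \<in> Vg m" for u
    using a[OF that] cR by (metis rtrancl_converseI)
  have "0 \<in> Vg m" using assms unfolding Vg_def by simp
  then have ne: "Vg m \<noteq> {}" by blast
  show ?thesis unfolding connected_graph_def
  proof (intro conjI ne ballI)
    fix u v assume "u \<in> Vg m" "v \<in> Vg m"
    then show "(u, v) \<in> ?R\<^sup>*" using a b by (meson rtrancl_trans)
  qed
qed

lemma nbrG_m: "m \<ge> 3 \<Longrightarrow> nbr (Vg m) (Eg m) m = {0}"
  unfolding nbr_def Vg_def adjG by auto

lemma nbrG_m1: "m \<ge> 3 \<Longrightarrow> nbr (Vg m) (Eg m) (m+1) = {0, m+2}"
  unfolding nbr_def Vg_def adjG by auto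

lemma G_fixing:
  assumes "m \<ge> 3" shows "fixing_set (Vg m) (Eg m) {1..m-1}"
  unfolding fixing_set_def
proof (intro conjI allI impI)
  show "{1..m-1} \<subseteq> Vg m" unfolding Vg_def by auto
  fix f assume H: "automorphism (Vg m) (Eg m) f \<and> (\<forall>s\<in>{1..m-1}. f s = s)"
  then have A: "automorphism (Vg m) (Eg m) f" and S: "\<And>s. 1 \<le> s \<Longrightarrow> s \<le> m-1 \<Longrightarrow> f s = s" by auto
  have V: "x \<in> Vg m \<longleftrightarrow> x < 2*m" for x unfolding Vg_def by simp
  have f1: "f 1 = 1" using S assms by auto
  have f0: "f 0 = 0"
    by (rule pin[OF A, of 0 1]) (use f1 assms in \<open>auto simp: V adjG\<close>)
  have fm1: "f (m+1) = m+1"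
  proof (rule pin_deg[OF A, of "m+1" 0])
    fix w assume w: "w \<in> Vg m" "{0,w} \<in> Eg m" "card (nbr (Vg m) (Eg m) w) = card (nbr (Vg m) (Eg m) (m+1))"
    have "w \<noteq> m"
    proof
      assume "w = m"
      then have e: "card (nbr (Vg m) (Eg m) m) = card (nbr (Vg m) (Eg m) (m+1))" using w(3) by simp
      have c1: "card (nbr (Vg m) (Eg m) m) = 1" using nbrG_m[OF assms] by simp
      have c2: "card (nbr (Vg m) (Eg m) (m+1)) = 2" using nbrG_m1[OF assms] by simp
      show False using e c1 c2 by linarith
    qed
    then show "w = m+1 \<or> f w = w" using w(1,2) S unfolding adjG by (cases "w \<le> m - 1") auto
  qed (use f0 assms in \<open>auto simp: V adjG\<close>)
  have fm: "f m = m"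
  proof (rule pin[OF A, of m 0])
    fix w assume "w\<in>Vg m" "{0,w}\<in>Eg m"
    then have "1 \<le> w \<and> w \<le> m+1" unfolding adjG by auto
    then show "w = m \<or> f w = w" using S fm1 by (cases "w \<le> m-1"; cases "w = m+1") auto
  qed (use f0 assms in \<open>auto simp: V adjG\<close>)
  have path: "f (m+1+d) = m+1+d" if "m+1+d < 2*m" for d
    using that
  proof (induction d rule: less_induct)
    case (less d)
    show ?case
    proof (cases d)
      case 0 then show ?thesis using fm1 by simp
    next
      case (Suc e)
      have fe: "f (m+1+e) = m+1+e" using less.IH[of e] Suc less.prems by auto
      have fe': "e > 0 \<Longrightarrow> f (m+e) = m+e" using less.IH[of "e-1"] Suc less.prems by auto
      show ?thesis
      proof (rule pin[OF A, of "m+1+d" "m+1+e"])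
        fix w assume w: "w \<in> Vg m" "{m+1+e,w} \<in> Eg m"
        then have "w = 0 \<or> w = m+e \<and> e > 0 \<or> w = m+1+d" unfolding adjG using Suc by auto
        then show "w = m+1+d \<or> f w = w" using f0 fe' by auto
      qed (use fe Suc less.prems in \<open>auto simp: V adjG\<close>)
    qed
  qed
  show "\<forall>v\<in>Vg m. f v = v"
  proof
    fix v assume v: "v \<in> Vg m"
    consider "v = 0" | "1 \<le> v \<and> v \<le> m-1" | "v = m" | "m+1 \<le> v" by linarith
    then show "f v = v"
    proof cases
      case 4
      define d where "d = v - (m+1)"
      have "v = m+1+d" using 4 unfolding d_def by simp
      then show ?thesis using path v unfolding Vg_def by auto
    qed (use f0 S fm in auto)
  qed
qed

lemma G_fix:
  assumes "m \<ge> 3" shows "fix_num (Vg m) (Eg m) = m - 1"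
proof (rule fix_num_eq[OF G_fixing[OF assms]])
  show "card {1..m-1} = m-1" by simp
  fix S assume S: "fixing_set (Vg m) (Eg m) S"
  have "card {1..m} \<le> card S + 1"
  proof (rule fix_lower[OF S])
    show "finite (Vg m)" unfolding Vg_def by simp
    show "{1..m} \<subseteq> Vg m" using assms unfolding Vg_def by auto
    show "\<And>x. {x,x} \<notin> Eg m" by (rule noloopG)
    fix a b w assume "a \<in> {1..m}" "b \<in> {1..m}" "w \<in> Vg m" "w \<noteq> a" "w \<noteq> b"
    then show "({a,w} \<in> Eg m) = ({b,w} \<in> Eg m)" unfolding adjG by auto
  qed
  then show "m - 1 \<le> card S" by simp
qed



definition VF :: "nat \<Rightarrow> (nat + nat) set" where "VF m = functi_V (Vg m)"
definition EF :: "nat \<Rightarrow> (nat + nat) set set" where "EF m = functi_E (Vg m) (Eg m) (gg m)"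

lemma VF_simps: "Inl x \<in> VF m \<longleftrightarrow> x < 2*m" "Inr x \<in> VF m \<longleftrightarrow> x < 2*m"
  unfolding VF_def functi_V_def Vg_def by auto

lemma EF_simps:
  "{Inl a, Inl b} \<in> EF m \<longleftrightarrow> {a,b} \<in> Eg m"
  "{Inr a, Inr b} \<in> EF m \<longleftrightarrow> {a,b} \<in> Eg m"
  "{Inl a, Inr b} \<in> EF m \<longleftrightarrow> a < 2*m \<and> b = gg m a"
  "{Inr b, Inl a} \<in> EF m \<longleftrightarrow> a < 2*m \<and> b = gg m a"
  unfolding EF_def functi_adj Vg_def by auto

lemma finite_VF: "finite (VF m)" unfolding VF_def functi_V_def Vg_def by simp

lemma noloopF: "{x,x} \<notin> EF m"
proof (cases x)
  case (Inl a) then show ?thesis using EF_simps(1)[of a a m] noloopG[of a m] by simp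
next
  case (Inr a) then show ?thesis using EF_simps(2)[of a a m] noloopG[of a m] by simp
qed

lemma sumE: obtains x where "w = Inl x" | x where "w = Inr x" by (cases w) auto

lemma K_adj:
  assumes "m \<ge> 3" "k \<in> Inl ` {1..m} \<union> {Inr 1}"
  shows "{k,w} \<in> EF m \<longleftrightarrow> w = Inl 0 \<or> w = Inr 0"
proof -
  consider i where "k = Inl i" "1 \<le> i" "i \<le> m" | "k = Inr 1" using assms(2) by auto
  then show ?thesis
  proof cases
    case 1
    show ?thesis
    proof (cases w rule: sumE)
      case (1 x) then show ?thesis using \<open>k = Inl i\<close> \<open>1 \<le> i\<close> \<open>i \<le> m\<close> assms(1)
        by (auto simp: EF_simps adjG)
    next
      case (2 x) then show ?thesis using \<open>k = Inl i\<close> \<open>1 \<le> i\<close> \<open>i \<le> m\<close> assms(1)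
        by (auto simp: EF_simps gg_def)
    qed
  next
    case 2
    show ?thesis
    proof (cases w rule: sumE)
      case (1 x) then show ?thesis using \<open>k = Inr 1\<close> assms(1)
        by (auto simp: EF_simps gg_def)
    next
      case (2 x) then show ?thesis using \<open>k = Inr 1\<close> assms(1)
        by (auto simp: EF_simps adjG)
    qed
  qed
qed

lemma F_lower:
  assumes "m \<ge> 3" "fixing_set (VF m) (EF m) S"
  shows "m + 1 \<le> card S + 1"
proof -
  let ?K = "Inl ` {1..m} \<union> {Inr 1} :: (nat+nat) set"
  have cK: "card ?K = m + 1"
  proof -
    have "card (Inl ` {1..m} :: (nat+nat) set) = m" by (simp add: card_image)
    moreover have "Inr 1 \<notin> (Inl ` {1..m} :: (nat+nat) set)" by auto
    ultimately show ?thesis by simp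
  qed
  have "card ?K \<le> card S + 1"
  proof (rule fix_lower[OF assms(2) finite_VF])
    show "?K \<subseteq> VF m" using assms(1) by (auto simp: VF_simps)
    show "\<And>x. {x,x} \<notin> EF m" by (rule noloopF)
    fix a b w assume "a \<in> ?K" "b \<in> ?K"
    then show "({a,w} \<in> EF m) = ({b,w} \<in> EF m)" using K_adj[OF assms(1)] by blast
  qed
  then show ?thesis using cK by simp
qed

lemma nbr_Inl0_card:
  assumes "m \<ge> 3" shows "card (nbr (VF m) (EF m) (Inl 0)) \<le> m + 2"
proof -
  have "nbr (VF m) (EF m) (Inl 0) \<subseteq> Inl ` {1..m+1} \<union> {Inr 1}"
  proof
    fix z assume z: "z \<in> nbr (VF m) (EF m) (Inl 0)"
    show "z \<in> Inl ` {1..m+1} \<union> {Inr 1}"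
    proof (cases z rule: sumE)
      case (1 x) then show ?thesis using z unfolding nbr_def by (auto simp: EF_simps adjG)
    next
      case (2 x) then show ?thesis using z unfolding nbr_def by (auto simp: EF_simps gg_def)
    qed
  qed
  then have "card (nbr (VF m) (EF m) (Inl 0)) \<le> card (Inl ` {1..m+1} \<union> {Inr 1} :: (nat+nat) set)"
    by (intro card_mono) auto
  also have "\<dots> \<le> card (Inl ` {1..m+1} :: (nat+nat) set) + card {Inr 1 :: nat+nat}" by (rule card_Un_le)
  also have "\<dots> \<le> m + 2" by (simp add: card_image)
  finally show ?thesis .
qed

lemma nbr_Inr0_card:
  assumes "m \<ge> 3" shows "card (nbr (VF m) (EF m) (Inr 0)) \<ge> 2*m + 1"
proof -
  have sub: "Inl ` {1..m} \<union> Inr ` {1..m+1} \<subseteq> nbr (VF m) (EF m) (Inr 0)"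
  proof
    fix z assume z: "z \<in> (Inl ` {1..m} \<union> Inr ` {1..m+1} :: (nat+nat) set)"
    show "z \<in> nbr (VF m) (EF m) (Inr 0)"
      using z assms unfolding nbr_def by (auto simp: EF_simps adjG gg_def VF_simps)
  qed
  have fin: "finite (nbr (VF m) (EF m) (Inr 0))"
    using finite_VF by (rule finite_subset[rotated]) (auto simp: nbr_def)
  have "card (Inl ` {1..m} \<union> Inr ` {1..m+1} :: (nat+nat) set) = m + (m+1)"
    by (subst card_Un_disjoint) (auto simp: card_image)
  then show ?thesis using card_mono[OF fin sub] by simp
qed

lemma F_fixing:
  assumes m3: "m \<ge> 3" shows "fixing_set (VF m) (EF m) (Inl ` {1..m})"
  unfolding fixing_set_def
proof (intro conjI allI impI)
  show "Inl ` {1..m} \<subseteq> VF m" using m3 by (auto simp: VF_simps)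
  fix f assume H: "automorphism (VF m) (EF m) f \<and> (\<forall>s\<in>Inl ` {1..m}. f s = s)"
  then have A: "automorphism (VF m) (EF m) f" and S: "\<And>i. 1 \<le> i \<Longrightarrow> i \<le> m \<Longrightarrow> f (Inl i) = Inl i" by auto
  have fl1: "f (Inl 1) = Inl 1" using S m3 by auto
  have fr0: "f (Inr 0) = Inr 0"
  proof (rule pin_deg[OF A, of "Inr 0" "Inl 1"])
    fix w assume w: "w \<in> VF m" "{Inl 1, w} \<in> EF m"
      "card (nbr (VF m) (EF m) w) = card (nbr (VF m) (EF m) (Inr 0))"
    have "w = Inl 0 \<or> w = Inr 0" using K_adj[OF m3, of "Inl 1" w] w(2) m3 by auto
    moreover have "w \<noteq> Inl 0" using w(3) nbr_Inl0_card[OF m3] nbr_Inr0_card[OF m3] m3 by auto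
    ultimately show "w = Inr 0 \<or> f w = w" by auto
  qed (use fl1 m3 in \<open>auto simp: VF_simps EF_simps gg_def\<close>)
  have fl0: "f (Inl 0) = Inl 0"
  proof (rule pin[OF A, of "Inl 0" "Inl 1"])
    fix w assume w: "w \<in> VF m" "{Inl 1, w} \<in> EF m"
    have "w = Inl 0 \<or> w = Inr 0" using K_adj[OF m3, of "Inl 1" w] w(2) m3 by auto
    then show "w = Inl 0 \<or> f w = w" using fr0 by auto
  qed (use fl1 m3 in \<open>auto simp: VF_simps EF_simps adjG\<close>)
  have fr1: "f (Inr 1) = Inr 1"
  proof (rule pin2[OF A, of "Inr 1" "Inl 0" "Inr 0"])
    fix w assume w: "w \<in> VF m" "{Inl 0, w} \<in> EF m" "{Inr 0, w} \<in> EF m"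
    show "w = Inr 1 \<or> f w = w"
    proof (cases w rule: sumE)
      case (1 x)
      then have "1 \<le> x \<and> x \<le> m" using w(2,3) by (auto simp: EF_simps adjG gg_def split: if_splits)
      then show ?thesis using S 1 by auto
    next
      case (2 x) then show ?thesis using w(2) by (auto simp: EF_simps gg_def)
    qed
  qed (use fl0 fr0 m3 in \<open>auto simp: VF_simps EF_simps adjG gg_def\<close>)
  have step: "f (Inl (m+1+d)) = Inl (m+1+d) \<and> f (Inr (d+2)) = Inr (d+2)" if "m+1+d < 2*m" for d
    using that
  proof (induction d rule: less_induct)
    case (less d)
    have L: "f (Inl (m+1+d)) = Inl (m+1+d)"
    proof (cases d)
      case 0
      show ?thesis
      proof (rule pin[OF A, of "Inl (m+1+d)" "Inl 0"])
        fix w assume w: "w \<in> VF m" "{Inl 0, w} \<in> EF m"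
        show "w = Inl (m+1+d) \<or> f w = w"
        proof (cases w rule: sumE)
          case (1 x)
          then have "1 \<le> x \<and> x \<le> m+1" using w(2) by (auto simp: EF_simps adjG)
          then show ?thesis using S 1 0 by (cases "x = m+1") auto
        next
          case (2 x) then show ?thesis using w(2) fr1 by (auto simp: EF_simps gg_def)
        qed
      qed (use fl0 m3 0 in \<open>auto simp: VF_simps EF_simps adjG\<close>)
    next
      case (Suc e)
      have IHe: "f (Inl (m+1+e)) = Inl (m+1+e) \<and> f (Inr (e+2)) = Inr (e+2)"
        using less.IH[of e] less.prems Suc by auto
      have IHe': "e > 0 \<Longrightarrow> f (Inl (m+e)) = Inl (m+e)"
        using less.IH[of "e-1"] less.prems Suc by auto
      show ?thesis
      proof (rule pin[OF A, of "Inl (m+1+d)" "Inl (m+1+e)"])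
        fix w assume w: "w \<in> VF m" "{Inl (m+1+e), w} \<in> EF m"
        show "w = Inl (m+1+d) \<or> f w = w"
        proof (cases w rule: sumE)
          case (1 x)
          then have "x = 0 \<or> (x = m+e \<and> e > 0) \<or> x = m+1+d" using w(2) Suc by (auto simp: EF_simps adjG)
          then show ?thesis using fl0 IHe' 1 by auto
        next
          case (2 x)
          then have "x = e + 2" using w(2) by (auto simp: EF_simps gg_def)
          then show ?thesis using IHe 2 by auto
        qed
      qed (use IHe less.prems Suc in \<open>auto simp: VF_simps EF_simps adjG\<close>)
    qed
    have R: "f (Inr (d+2)) = Inr (d+2)"
    proof (rule pin2[OF A, of "Inr (d+2)" "Inl (m+1+d)" "Inr 0"])
      fix w assume w: "w \<in> VF m" "{Inl (m+1+d), w} \<in> EF m" "{Inr 0, w} \<in> EF m"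
      show "w = Inr (d+2) \<or> f w = w"
      proof (cases w rule: sumE)
        case (1 x)
        have "1 \<le> x \<and> x \<le> m" using w(3) 1 by (auto simp: EF_simps gg_def split: if_splits)
        moreover have "x = 0 \<or> x \<ge> m+1" using w(2) 1 by (auto simp: EF_simps adjG)
        ultimately show ?thesis by auto
      next
        case (2 x) then show ?thesis using w(2) by (auto simp: EF_simps gg_def)
      qed
    qed (use L fr0 less.prems m3 in \<open>auto simp: VF_simps EF_simps adjG gg_def\<close>)
    show ?case using L R by simp
  qed
  have frmid: "f (Inr x) = Inr x" if h: "2 \<le> x" "x \<le> m" for x
  proof -
    have e: "x - 2 + 2 = x" using h by simp
    have "m+1+(x-2) < 2*m" using h m3 by simp
    then have "f (Inr (x-2+2)) = Inr (x-2+2)" using step by blast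
    then show ?thesis using e by simp
  qed
  have rpath: "f (Inr (m+1+d)) = Inr (m+1+d)" if "m+1+d < 2*m" for d
    using that
  proof (induction d rule: less_induct)
    case (less d)
    show ?case
    proof (cases d)
      case 0
      show ?thesis
      proof (rule pin[OF A, of "Inr (m+1+d)" "Inr 0"])
        fix w assume w: "w \<in> VF m" "{Inr 0, w} \<in> EF m"
        show "w = Inr (m+1+d) \<or> f w = w"
        proof (cases w rule: sumE)
          case (1 x)
          then have "1 \<le> x \<and> x \<le> m" using w(2) by (auto simp: EF_simps gg_def split: if_splits)
          then show ?thesis using S 1 by auto
        next
          case (2 x)
          then have "1 \<le> x \<and> x \<le> m+1" using w(2) by (auto simp: EF_simps adjG)
          moreover have "2 \<le> x \<Longrightarrow> x \<le> m \<Longrightarrow> f (Inr x) = Inr x"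
            using frmid by blast
          ultimately show ?thesis using fr1 2 0 by (cases "x = 1"; cases "x = m+1") auto
        qed
      qed (use fr0 m3 0 in \<open>auto simp: VF_simps EF_simps adjG\<close>)
    next
      case (Suc e)
      have IHe: "f (Inr (m+1+e)) = Inr (m+1+e)" using less.IH[of e] less.prems Suc by auto
      have IHe': "e > 0 \<Longrightarrow> f (Inr (m+e)) = Inr (m+e)" using less.IH[of "e-1"] less.prems Suc by auto
      show ?thesis
      proof (rule pin[OF A, of "Inr (m+1+d)" "Inr (m+1+e)"])
        fix w assume w: "w \<in> VF m" "{Inr (m+1+e), w} \<in> EF m"
        show "w = Inr (m+1+d) \<or> f w = w"
        proof (cases w rule: sumE)
          case (1 x)
          then show ?thesis using w(2) by (auto simp: EF_simps gg_def split: if_splits)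
        next
          case (2 x)
          then have "x = 0 \<or> (x = m+e \<and> e > 0) \<or> x = m+1+d" using w(2) Suc by (auto simp: EF_simps adjG)
          then show ?thesis using fr0 IHe' 2 by auto
        qed
      qed (use IHe less.prems Suc in \<open>auto simp: VF_simps EF_simps adjG\<close>)
    qed
  qed
  show "\<forall>v\<in>VF m. f v = v"
  proof
    fix v assume v: "v \<in> VF m"
    show "f v = v"
    proof (cases v rule: sumE)
      case (1 x)
      then have x: "x < 2*m" using v by (simp add: VF_simps)
      consider "x = 0" | "1 \<le> x \<and> x \<le> m" | "m+1 \<le> x" by linarith
      then show ?thesis
      proof cases
        case 3
        define d where "d = x - (m+1)"
        have "x = m+1+d" using 3 unfolding d_def by simp
        then show ?thesis using step[of d] x 1 by auto
      qed (use fl0 S 1 in auto)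
    next
      case (2 x)
      then have x: "x < 2*m" using v by (simp add: VF_simps)
      consider "x = 0" | "x = 1" | "2 \<le> x \<and> x \<le> m" | "m+1 \<le> x" by linarith
      then show ?thesis
      proof cases
        case 3
        then show ?thesis using frmid 2 by auto
      next
        case 4
        define d where "d = x - (m+1)"
        have "x = m+1+d" using 4 unfolding d_def by simp
        then show ?thesis using rpath[of d] x 2 by auto
      qed (use fr0 fr1 2 in auto)
    qed
  qed
qed


theorem lemma2p7:
  fixes t1 :: nat
  assumes "t1 \<ge> 2"
  shows "\<exists>(V :: nat set) E g. simple_graph V E \<and> connected_graph V E \<and>
           (\<forall>u\<in>V. g u \<in> V) \<and>
           fix_num V E = t1 \<and>
           fix_num (functi_V V) (functi_E V E g) = t1 + 1"
proof -
  define m where "m = t1 + 1"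
  have m3: "m \<ge> 3" using assms unfolding m_def by simp
  have gV: "\<forall>u\<in>Vg m. gg m u \<in> Vg m" using m3 unfolding Vg_def gg_def by auto
  have fG: "fix_num (Vg m) (Eg m) = t1" using G_fix[OF m3] unfolding m_def by simp
  have fF: "fix_num (VF m) (EF m) = m"
  proof (rule fix_num_eq[OF F_fixing[OF m3]])
    show "card (Inl ` {1..m} :: (nat+nat) set) = m" by (simp add: card_image)
    fix S assume "fixing_set (VF m) (EF m) S"
    then show "m \<le> card S" using F_lower[OF m3] by fastforce
  qed
  show ?thesis
    using G_simple[OF m3] G_connected[OF m3] gV fG fF unfolding VF_def EF_def m_def by blast
qed

end
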